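(* Let $p$ be the transition density of a subordinator as described in the context, and let $q\colon\mathbb{R}\to[0,\infty]$ be measurable. Assume that for some $s<t$, $$\sup_{x<y}\int_s^t\int_{\mathbb{R}}\frac{p(s,x,u,z)p(u,z,t,y)}{p(s,x,t,y)}q(z)\,dz\,du<\infty.$$ Then $q\in L^\infty(\mathbb{R})$.
   Context: A subordinator is a nondecreasing Lévy process on $\mathbb{R}$. We assume its distribution at each time $t>0$ has a density $p_t$ with respect to Lebesgue measure, and set $p(s,x,t,y)=p_{t-s}(y-x)$ for $s<t$; $p(s,x,t,y)=0$ whenever $t\le s$ or $y\le x$, and $p(s,x,t,y)>0$ otherwise. *)

theory Defs
  imports "HOL-Probability.Probability"
begin

text \<open>Levy process: X 0 = 0 a.s., independent increments,
stationary increments, stochastic continuity, and a.s. cadlag paths (for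
nondecreasing paths this is a.s. right-continuity).\<close>

definition subordinator :: "'a measure \<Rightarrow> (real \<Rightarrow> 'a \<Rightarrow> real) \<Rightarrow> bool" where
  "subordinator M X \<longleftrightarrow>
     prob_space M \<and>
     (\<forall>t\<ge>0. X t \<in> borel_measurable M) \<and>
     (AE \<omega> in M. X 0 \<omega> = 0) \<and>
     (AE \<omega> in M. mono_on {0..} (\<lambda>t. X t \<omega>)) \<and>
     (AE \<omega> in M. \<forall>t\<ge>0. continuous (at_right t) (\<lambda>s. X s \<omega>)) \<and>
     (\<forall>(n::nat) (ts::nat \<Rightarrow> real). ts 0 \<ge> 0 \<longrightarrow> mono ts \<longrightarrow>
        prob_space.indep_vars M (\<lambda>_. borel)
          (\<lambda>i \<omega>. X (ts (Suc i)) \<omega> - X (ts i) \<omega>) {..<n}) \<and>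
     (\<forall>s t. 0 \<le> s \<longrightarrow> s \<le> t \<longrightarrow>
        distr M borel (\<lambda>\<omega>. X t \<omega> - X s \<omega>) = distr M borel (X (t - s))) \<and>
     (\<forall>\<epsilon>>0. ((\<lambda>t. measure M {\<omega>\<in>space M. \<bar>X t \<omega>\<bar> > \<epsilon>}) \<longlongrightarrow> 0) (at_right 0))"

text \<open>p t is a density of the law of X t (t > 0), with the version convention of
the paper: p t w > 0 for w > 0 and p t w = 0 for w \<le> 0.\<close>

definition subordinator_density :: "'a measure \<Rightarrow> (real \<Rightarrow> 'a \<Rightarrow> real) \<Rightarrow> (real \<Rightarrow> real \<Rightarrow> real) \<Rightarrow> bool" where
  "subordinator_density M X p \<longleftrightarrow>
     (\<forall>t>0. distributed M lborel (X t) (\<lambda>w. ennreal (p t w))) \<and>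
     (\<forall>t>0. \<forall>w. (w > 0 \<longrightarrow> p t w > 0) \<and> (w \<le> 0 \<longrightarrow> p t w = 0))"

definition trans_dens :: "(real \<Rightarrow> real \<Rightarrow> real) \<Rightarrow> real \<Rightarrow> real \<Rightarrow> real \<Rightarrow> real \<Rightarrow> real" where
  "trans_dens p s x t y = (if s < t \<and> x < y then p (t - s) (y - x) else 0)"

end

theory Submission
  imports Defs
begin


lemma CK:
  assumes sub: "subordinator M X" and dens: "subordinator_density M X p"
    and r: "0 < r" "r < T"
  shows "AE h in lborel. ennreal (p T h) = (\<integral>\<^sup>+y. ennreal (p r (h - y)) * ennreal (p (T - r) y) \<partial>lborel)"
proof -
  interpret prob_space M using sub unfolding subordinator_def by blast
  have meas: "\<And>t. t \<ge> 0 \<Longrightarrow> X t \<in> borel_measurable M" using sub unfolding subordinator_def by blast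
  have X0: "AE \<omega> in M. X 0 \<omega> = 0" using sub unfolding subordinator_def by blast
  define ts where "ts = (\<lambda>i::nat. if i = 0 then 0 else if i = 1 then r else T)"
  have "mono ts" unfolding ts_def mono_def using r by auto
  moreover have "ts 0 \<ge> 0" by (simp add: ts_def)
  ultimately have iv: "indep_vars (\<lambda>_. borel) (\<lambda>i \<omega>. X (ts (Suc i)) \<omega> - X (ts i) \<omega>) {..<2}"
    using sub unfolding subordinator_def by blast
  have "{..<2::nat} = insert 0 {1}" by auto
  with iv have "indep_var borel ((\<lambda>i \<omega>. X (ts (Suc i)) \<omega> - X (ts i) \<omega>) 0)
     borel (\<lambda>\<omega>. \<Sum>i\<in>{1}. (\<lambda>i \<omega>. X (ts (Suc i)) \<omega> - X (ts i) \<omega>) i \<omega>)"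
    by (intro indep_vars_sum) auto
  then have ind: "indep_var borel (\<lambda>\<omega>. X r \<omega> - X 0 \<omega>) borel (\<lambda>\<omega>. X T \<omega> - X r \<omega>)"
    by (simp add: ts_def)
  have d1: "distributed M lborel (X r) (\<lambda>w. ennreal (p r w))"
    using dens r unfolding subordinator_density_def by auto
  have d2: "distributed M lborel (X (T - r)) (\<lambda>w. ennreal (p (T - r) w))"
    using dens r unfolding subordinator_density_def by auto
  have d3: "distributed M lborel (X T) (\<lambda>w. ennreal (p T w))"
    using dens r unfolding subordinator_density_def by auto
  have mr[measurable]: "X r \<in> borel_measurable M" "X 0 \<in> borel_measurable M" "X T \<in> borel_measurable M"
    using meas r by auto
  have D1: "distributed M lborel (\<lambda>\<omega>. X r \<omega> - X 0 \<omega>) (\<lambda>w. ennreal (p r w))"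
  proof -
    have "distr M lborel (\<lambda>\<omega>. X r \<omega> - X 0 \<omega>) = distr M lborel (X r)"
      by (rule distr_cong_AE) (use X0 in auto)
    then show ?thesis using d1 unfolding distributed_def by auto
  qed
  have D2: "distributed M lborel (\<lambda>\<omega>. X T \<omega> - X r \<omega>) (\<lambda>w. ennreal (p (T - r) w))"
  proof -
    have "distr M borel (\<lambda>\<omega>. X T \<omega> - X r \<omega>) = distr M borel (X (T - r))"
      using sub r unfolding subordinator_def by auto
    moreover have "distr M lborel (\<lambda>\<omega>. X T \<omega> - X r \<omega>) = distr M borel (\<lambda>\<omega>. X T \<omega> - X r \<omega>)"
      by (rule distr_cong) auto
    moreover have "distr M lborel (X (T - r)) = distr M borel (X (T - r))"
      by (rule distr_cong) auto
    ultimately show ?thesis using d2 unfolding distributed_def by auto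
  qed
  from distributed_convolution[OF ind D1 D2]
  have "distributed M lborel (\<lambda>\<omega>. X r \<omega> - X 0 \<omega> + (X T \<omega> - X r \<omega>))
     (\<lambda>x. \<integral>\<^sup>+y. ennreal (p r (x - y)) * ennreal (p (T - r) y) \<partial>lborel)" .
  moreover have "distr M lborel (\<lambda>\<omega>. X r \<omega> - X 0 \<omega> + (X T \<omega> - X r \<omega>)) = distr M lborel (X T)"
    by (rule distr_cong_AE) (use X0 in auto)
  ultimately have "distributed M lborel (X T)
     (\<lambda>x. \<integral>\<^sup>+y. ennreal (p r (x - y)) * ennreal (p (T - r) y) \<partial>lborel)"
    unfolding distributed_def by auto
  from distributed_unique[OF d3 this] show ?thesis .
qed



lemma CK2:
  assumes sub: "subordinator M X" and dens: "subordinator_density M X p"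
    and pm: "(\<lambda>(t, w). p t w) \<in> borel_measurable (lborel \<Otimes>\<^sub>M lborel)"
    and st: "s < t"
  shows "AE h in lborel. AE u in lborel. u \<in> {s<..<t} \<longrightarrow>
     ennreal (p (t - s) h) = (\<integral>\<^sup>+y. ennreal (p (u - s) (h - y)) * ennreal (p (t - u) y) \<partial>lborel)"
proof -
  have pm'[measurable]: "(\<lambda>x. p (f x) (g x)) \<in> borel_measurable N"
    if [measurable]: "f \<in> borel_measurable N" "g \<in> borel_measurable N" for f g and N :: "'b measure"
  proof -
    have "(\<lambda>x. (f x, g x)) \<in> measurable N (lborel \<Otimes>\<^sub>M lborel)" by measurable
    from measurable_compose[OF this pm] show ?thesis by simp
  qed
  have ae: "AE u in lborel. AE h in lborel. u \<in> {s<..<t} \<longrightarrow>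
     ennreal (p (t - s) h) = (\<integral>\<^sup>+y. ennreal (p (u - s) (h - y)) * ennreal (p (t - u) y) \<partial>lborel)"
  proof (rule AE_I2)
    fix u show "AE h in lborel. u \<in> {s<..<t} \<longrightarrow>
     ennreal (p (t - s) h) = (\<integral>\<^sup>+y. ennreal (p (u - s) (h - y)) * ennreal (p (t - u) y) \<partial>lborel)"
    proof (cases "u \<in> {s<..<t}")
      case True
      then have "0 < u - s" "u - s < t - s" by auto
      from CK[OF sub dens this] show ?thesis by simp
    qed auto
  qed
  moreover have ms: "{x \<in> space (lborel \<Otimes>\<^sub>M lborel). (\<lambda>u h. u \<in> {s<..<t} \<longrightarrow>
     ennreal (p (t - s) h) = (\<integral>\<^sup>+y. ennreal (p (u - s) (h - y)) * ennreal (p (t - u) y) \<partial>lborel)) (fst x) (snd x)}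
     \<in> sets (lborel \<Otimes>\<^sub>M lborel)"
    by measurable
  ultimately show ?thesis using lborel_pair.AE_commute[of "(\<lambda>u h. u \<in> {s<..<t} \<longrightarrow>
     ennreal (p (t - s) h) = (\<integral>\<^sup>+y. ennreal (p (u - s) (h - y)) * ennreal (p (t - u) y) \<partial>lborel))", OF ms] by blast
qed



lemma bounded_from_intervals:
  fixes q :: "real \<Rightarrow> ennreal" and K :: real
  assumes q[measurable]: "q \<in> borel_measurable lborel" and K: "K \<ge> 0"
  and I: "\<And>a b. a < b \<Longrightarrow> (\<integral>\<^sup>+z. q z * indicator {a..b} z \<partial>lborel) \<le> ennreal (K * (b - a))"
  shows "AE z in lborel. q z \<le> ennreal (K + 1)"
proof -
  define B where "B = {z. ennreal (K + 1) < q z}"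
  have Bs[measurable]: "B \<in> sets borel" unfolding B_def by measurable
  have main: "B \<inter> ball 0 (real n) \<in> null_sets lborel" for n :: nat
  proof -
    define Bn where "Bn = B \<inter> ball 0 (real n)"
    have Bns[measurable]: "Bn \<in> sets borel" unfolding Bn_def by measurable
    define m where "m = emeasure lborel Bn"
    have mfin: "m < \<infinity>"
    proof -
      have "m \<le> emeasure lborel {- real n .. real n}"
        unfolding m_def Bn_def by (intro emeasure_mono) (auto simp: dist_real_def)
      also have "\<dots> < \<infinity>" by simp
      finally show ?thesis .
    qed
    have key: "ennreal (K + 1) * m \<le> ennreal K * (m + ennreal e)" if e: "e > 0" for e
    proof -
      obtain U where U: "open U" "Bn \<subseteq> U" "emeasure lborel (U - Bn) < e"
        using outer_regular_lborel[OF Bns e] by blast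
      have Us[measurable]: "U \<in> sets borel" using U(1) by auto
      have lU: "emeasure lborel U \<le> m + ennreal e"
      proof -
        have "emeasure lborel U \<le> emeasure lborel Bn + emeasure lborel (U - Bn)"
          using U(2) emeasure_subadditive[of Bn lborel "U - Bn"] by (simp add: Un_absorb1)
        then show ?thesis unfolding m_def using U(3) by (meson add_left_mono le_less order_trans)
      qed
      define KK where "KK = {(c::real, r::real). 0 < r \<and> cball c r \<subseteq> U}"
      obtain C where C: "countable C" "C \<subseteq> KK"
        "pairwise (\<lambda>i j. disjnt (cball (fst i) (snd i)) (cball (fst j) (snd j))) C"
        "negligible (Bn - (\<Union>i \<in> C. cball (fst i) (snd i)))"
      proof (rule Vitali_covering_theorem_cballs[of KK snd Bn fst])
        show "\<And>i. i \<in> KK \<Longrightarrow> 0 < snd i" unfolding KK_def by auto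
        fix x d assume x: "x \<in> Bn" and d: "(0::real) < d"
        then have "x \<in> U" using U by auto
        then obtain \<epsilon> where \<epsilon>: "\<epsilon> > 0" "ball x \<epsilon> \<subseteq> U" using U(1) open_contains_ball by blast
        define r where "r = min (d/2) (\<epsilon>/2)"
        have "cball x r \<subseteq> ball x \<epsilon>" unfolding r_def using \<epsilon> by (auto simp: dist_real_def)
        then have "(x, r) \<in> KK" unfolding KK_def r_def using \<epsilon> d by auto
        moreover have "r < d" unfolding r_def using d by auto
        ultimately show "\<exists>i. i \<in> KK \<and> x \<in> cball (fst i) (snd i) \<and> snd i < d"
          using \<epsilon> d by (intro exI[of _ "(x,r)"]) (auto simp: r_def)
      qed blast
      define V where "V = (\<Union>i \<in> C. cball (fst i) (snd i))"
      have Vs[measurable]: "V \<in> sets borel" unfolding V_def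
        using C(1) by (intro sets.countable_UN'') auto
      have VU: "V \<subseteq> U" unfolding V_def using C(2) unfolding KK_def by fastforce
      have N: "Bn - V \<in> null_sets lborel"
      proof -
        have "Bn - V \<in> null_sets lebesgue" using C(4) negligible_iff_null_sets V_def by blast
        then show ?thesis using null_sets_completion_iff[of "Bn - V" lborel] by auto
      qed
      have "ennreal (K + 1) * m = (\<integral>\<^sup>+z. ennreal (K + 1) * indicator Bn z \<partial>lborel)"
        unfolding m_def by (simp add: nn_integral_cmult)
      also have "\<dots> \<le> (\<integral>\<^sup>+z. q z * indicator Bn z \<partial>lborel)"
        by (intro nn_integral_mono) (auto simp: Bn_def B_def indicator_def less_imp_le)
      also have "\<dots> \<le> (\<integral>\<^sup>+z. q z * indicator V z + q z * indicator (Bn - V) z \<partial>lborel)"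
        by (intro nn_integral_mono) (auto simp: indicator_def)
      also have "\<dots> = (\<integral>\<^sup>+z. q z * indicator V z \<partial>lborel)"
        by (simp add: nn_integral_add nn_integral_null_set[OF N])
      also have "\<dots> = emeasure (density lborel q) V"
        by (simp add: emeasure_density)
      also have "\<dots> = (\<integral>\<^sup>+i. emeasure (density lborel q) (cball (fst i) (snd i)) \<partial>count_space C)"
        unfolding V_def
      proof (rule emeasure_UN_countable)
        show "disjoint_family_on (\<lambda>i. cball (fst i) (snd i)) C"
          using C(3) unfolding disjoint_family_on_def pairwise_def disjnt_def by blast
      qed (use C(1) in auto)
      also have "\<dots> \<le> (\<integral>\<^sup>+i. ennreal K * emeasure lborel (cball (fst i) (snd i)) \<partial>count_space C)"
      proof (intro nn_integral_mono)
        fix i assume "i \<in> space (count_space C)"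
        then have r: "snd i > 0" using C(2) unfolding KK_def by auto
        have "emeasure (density lborel q) (cball (fst i) (snd i))
           = (\<integral>\<^sup>+z. q z * indicator {fst i - snd i .. fst i + snd i} z \<partial>lborel)"
          by (simp add: emeasure_density cball_eq_atLeastAtMost)
        also have "\<dots> \<le> ennreal (K * (fst i + snd i - (fst i - snd i)))"
          using r by (intro I) auto
        also have "\<dots> = ennreal K * emeasure lborel (cball (fst i) (snd i))"
          using r K by (simp add: cball_eq_atLeastAtMost ennreal_mult)
        finally show "emeasure (density lborel q) (cball (fst i) (snd i))
           \<le> ennreal K * emeasure lborel (cball (fst i) (snd i))" .
      qed
      also have "\<dots> = ennreal K * (\<integral>\<^sup>+i. emeasure lborel (cball (fst i) (snd i)) \<partial>count_space C)"
        by (simp add: nn_integral_cmult)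
      also have "(\<integral>\<^sup>+i. emeasure lborel (cball (fst i) (snd i)) \<partial>count_space C) = emeasure lborel V"
        unfolding V_def
      proof (rule emeasure_UN_countable[symmetric])
        show "disjoint_family_on (\<lambda>i. cball (fst i) (snd i)) C"
          using C(3) unfolding disjoint_family_on_def pairwise_def disjnt_def by blast
      qed (use C(1) in auto)
      also have "ennreal K * emeasure lborel V \<le> ennreal K * (m + ennreal e)"
      proof -
        have "emeasure lborel V \<le> emeasure lborel U" using VU by (intro emeasure_mono) auto
        then have "emeasure lborel V \<le> m + ennreal e" using lU by (rule order_trans)
        then show ?thesis by (rule mult_left_mono) simp
      qed
      finally show ?thesis .
    qed
    have "m \<le> 0"
    proof (rule ennreal_le_epsilon)
      fix e :: real assume e: "0 < e"
      define e' where "e' = e / (K + 1)"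
      have e': "e' > 0" using e K by (simp add: e'_def)
      from key[OF e'] have "ennreal (K + 1) * m \<le> ennreal K * m + ennreal K * ennreal e'"
        by (simp add: distrib_left)
      then have "ennreal K * m + m \<le> ennreal K * m + ennreal K * ennreal e'"
      proof -
        have "ennreal (K + 1) = ennreal K + 1" using K by (simp add: ennreal_plus)
        then have "ennreal (K + 1) * m = ennreal K * m + m" by (simp add: distrib_right)
        then show ?thesis using \<open>ennreal (K + 1) * m \<le> ennreal K * m + ennreal K * ennreal e'\<close> by simp
      qed
      then have "m \<le> ennreal K * ennreal e'"
      proof -
        have "ennreal K * m < \<top>" using mfin by (simp add: ennreal_mult_less_top)
        then show ?thesis using \<open>ennreal K * m + m \<le> ennreal K * m + ennreal K * ennreal e'\<close>
          by (auto simp add: ennreal_add_left_cancel_le)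
      qed
      also have "\<dots> = ennreal (K * e')" using K e' by (simp add: ennreal_mult)
      also have "\<dots> \<le> ennreal e" unfolding e'_def using K e
        by (intro ennreal_leI) (simp add: field_simps)
      finally show "m \<le> 0 + ennreal e" by simp
    qed
    then show ?thesis unfolding m_def Bn_def[symmetric] by auto
  qed
  have ex: "\<exists>n::nat. z \<in> ball 0 (real n)" for z :: real
    using reals_Archimedean2[of "\<bar>z\<bar>"] by (auto simp: dist_real_def)
  have "B = (\<Union>n. B \<inter> ball 0 (real n))"
    using ex by blast
  then have "B \<in> null_sets lborel" using main by (metis null_sets_UN)
  then show ?thesis
    by (rule AE_I') (auto simp: B_def not_less)
qed



theorem theorem3p3:
  fixes M :: "'a measure" and X :: "real \<Rightarrow> 'a \<Rightarrow> real"
    and p :: "real \<Rightarrow> real \<Rightarrow> real" and q :: "real \<Rightarrow> ennreal" and s t :: real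
  assumes "subordinator M X"
    and "subordinator_density M X p"
    and "(\<lambda>(t, w). p t w) \<in> borel_measurable (lborel \<Otimes>\<^sub>M lborel)"
    and "q \<in> borel_measurable lborel"
    and "s < t"
    and "(SUP xy\<in>{(x, y). x < y}.
           \<integral>\<^sup>+ u. indicator {s..t} u *
             (\<integral>\<^sup>+ z. ennreal (trans_dens p s (fst xy) u z * trans_dens p u z t (snd xy)
                              / trans_dens p s (fst xy) t (snd xy)) * q z \<partial>lborel) \<partial>lborel) < \<infinity>"
  shows "\<exists>C::real. AE z in lborel. q z \<le> ennreal C"
proof -
  note sub = assms(1) and dens = assms(2) and pm = assms(3) and qm[measurable] = assms(4)
    and st = assms(5) and fin = assms(6)
  have pc[measurable]: "(\<lambda>x. p (f x) (g x)) \<in> borel_measurable N"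
    if [measurable]: "f \<in> borel_measurable N" "g \<in> borel_measurable N" for f g and N :: "'b measure"
  proof -
    have "(\<lambda>x. (f x, g x)) \<in> measurable N (lborel \<Otimes>\<^sub>M lborel)" by measurable
    from measurable_compose[OF this pm] show ?thesis by simp
  qed
  have ppos: "\<And>r w. r > 0 \<Longrightarrow> w > 0 \<Longrightarrow> p r w > 0"
    and pzero: "\<And>r w. r > 0 \<Longrightarrow> w \<le> 0 \<Longrightarrow> p r w = 0"
    using dens unfolding subordinator_density_def by auto
  have pnn: "\<And>r w. r > 0 \<Longrightarrow> p r w \<ge> 0"
    using ppos pzero by (metis less_eq_real_def not_le)
  define T where "T = t - s"
  have T: "T > 0" using st by (simp add: T_def)
  define Sv where "Sv = (SUP xy\<in>{(x, y). x < y}.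
           \<integral>\<^sup>+ u. indicator {s..t} u *
             (\<integral>\<^sup>+ z. ennreal (trans_dens p s (fst xy) u z * trans_dens p u z t (snd xy)
                              / trans_dens p s (fst xy) t (snd xy)) * q z \<partial>lborel) \<partial>lborel)"
  have Sv_fin: "Sv < \<infinity>" using fin unfolding Sv_def .
  have J: "(\<integral>\<^sup>+u. indicator {s<..<t} u * (\<integral>\<^sup>+z. ennreal (p (u - s) (z - x)) * ennreal (p (t - u) (x + h - z)) * q z \<partial>lborel) \<partial>lborel)
      \<le> ennreal (p T h) * Sv" if h: "h > 0" for x h
  proof -
    define y where "y = x + h"
    have xy: "x < y" using h by (simp add: y_def)
    have I: "(\<integral>\<^sup>+ u. indicator {s..t} u *
             (\<integral>\<^sup>+ z. ennreal (trans_dens p s x u z * trans_dens p u z t y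
                              / trans_dens p s x t y) * q z \<partial>lborel) \<partial>lborel) \<le> Sv"
      unfolding Sv_def using xy by (intro SUP_upper2[of "(x, y)"]) auto
    have D: "trans_dens p s x t y = p T h" unfolding trans_dens_def T_def y_def using st h by auto
    have Dpos: "p T h > 0" using ppos T h by auto
    have pw: "indicator {s<..<t} u * (\<integral>\<^sup>+z. ennreal (p (u - s) (z - x)) * ennreal (p (t - u) (x + h - z)) * q z \<partial>lborel)
       \<le> ennreal (p T h) * (indicator {s..t} u *
             (\<integral>\<^sup>+ z. ennreal (trans_dens p s x u z * trans_dens p u z t y
                              / trans_dens p s x t y) * q z \<partial>lborel))" for u
    proof (cases "u \<in> {s<..<t}")
      case True
      have eq: "ennreal (p (u - s) (z - x)) * ennreal (p (t - u) (x + h - z)) * q z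
         = ennreal (p T h) * (ennreal (trans_dens p s x u z * trans_dens p u z t y
                              / trans_dens p s x t y) * q z)" for z
      proof -
        have a: "trans_dens p s x u z = p (u - s) (z - x)"
          using True pzero[of "u - s" "z - x"] unfolding trans_dens_def by auto
        have b: "trans_dens p u z t y = p (t - u) (x + h - z)"
          using True pzero[of "t - u" "y - z"] unfolding trans_dens_def y_def by auto
        have n1: "p (u - s) (z - x) \<ge> 0" "p (t - u) (x + h - z) \<ge> 0" using True pnn by auto
        have "ennreal (p T h) * ennreal (p (u - s) (z - x) * p (t - u) (x + h - z) / p T h)
            = ennreal (p (u - s) (z - x) * p (t - u) (x + h - z))"
          using Dpos n1 by (simp add: ennreal_mult[symmetric])
        then have E: "ennreal (p T h) * ennreal (p (u - s) (z - x) * p (t - u) (x + h - z) / p T h)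
            = ennreal (p (u - s) (z - x)) * ennreal (p (t - u) (x + h - z))"
          using n1 by (simp add: ennreal_mult)
        show ?thesis unfolding a b D by (metis (no_types) E mult.assoc)
      qed
      have "(\<integral>\<^sup>+z. ennreal (p (u - s) (z - x)) * ennreal (p (t - u) (x + h - z)) * q z \<partial>lborel)
          = ennreal (p T h) * (\<integral>\<^sup>+ z. ennreal (trans_dens p s x u z * trans_dens p u z t y
                              / trans_dens p s x t y) * q z \<partial>lborel)"
        unfolding eq by (rule nn_integral_cmult) (simp add: trans_dens_def)
      then show ?thesis using True by simp
    qed simp
    have "(\<integral>\<^sup>+u. indicator {s<..<t} u * (\<integral>\<^sup>+z. ennreal (p (u - s) (z - x)) * ennreal (p (t - u) (x + h - z)) * q z \<partial>lborel) \<partial>lborel)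
      \<le> (\<integral>\<^sup>+u. ennreal (p T h) * (indicator {s..t} u *
             (\<integral>\<^sup>+ z. ennreal (trans_dens p s x u z * trans_dens p u z t y
                              / trans_dens p s x t y) * q z \<partial>lborel)) \<partial>lborel)"
      by (intro nn_integral_mono pw)
    also have "\<dots> = ennreal (p T h) * (\<integral>\<^sup>+u. indicator {s..t} u *
             (\<integral>\<^sup>+ z. ennreal (trans_dens p s x u z * trans_dens p u z t y
                              / trans_dens p s x t y) * q z \<partial>lborel) \<partial>lborel)"
      by (rule nn_integral_cmult) (simp add: trans_dens_def)
    also have "\<dots> \<le> ennreal (p T h) * Sv" using I by (rule mult_left_mono) simp
    finally show ?thesis .
  qed
  have step4: "(\<integral>\<^sup>+z. q z * indicator {a + h..b} z \<partial>lborel) * ennreal T \<le> Sv * ennreal (b - a)"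
    if ab: "a < b" and h: "h > 0" and good: "AE u in lborel. u \<in> {s<..<t} \<longrightarrow>
     ennreal (p (t - s) h) = (\<integral>\<^sup>+y. ennreal (p (u - s) (h - y)) * ennreal (p (t - u) y) \<partial>lborel)" for a b h
  proof -
    define conv where "conv u = (\<integral>\<^sup>+y. ennreal (p (u - s) (h - y)) * ennreal (p (t - u) y) \<partial>lborel)" for u
    define H where "H x u z = indicator {a..b} x * indicator {s<..<t} u *
       (ennreal (p (u - s) (z - x)) * ennreal (p (t - u) (x + h - z)) * q z)" for x u z
    have Hm[measurable]: "(\<lambda>(x, u, z). H x u z) \<in> borel_measurable (lborel \<Otimes>\<^sub>M lborel \<Otimes>\<^sub>M lborel)"
      unfolding H_def by measurable
    have Dpos: "p T h > 0" using ppos T h by auto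
    define Q where "Q = (\<integral>\<^sup>+z. q z * indicator {a + h..b} z \<partial>lborel)"
    have "(\<integral>\<^sup>+u. indicator {s<..<t} u * conv u \<partial>lborel) = (\<integral>\<^sup>+u. ennreal (p T h) * indicator {s<..<t} u \<partial>lborel)"
      using good by (intro nn_integral_cong_AE) (auto simp: conv_def T_def indicator_def)
    also have "\<dots> = ennreal (p T h) * ennreal T" using st by (simp add: nn_integral_cmult T_def)
    finally have cI: "(\<integral>\<^sup>+u. indicator {s<..<t} u * conv u \<partial>lborel) = ennreal (p T h) * ennreal T" .
    have transl: "(\<integral>\<^sup>+x. H x u z \<partial>lborel) = indicator {s<..<t} u * indicator {a + h..b} z * q z * conv u"
      if u: "u \<in> {s<..<t}" and z: "z \<in> {a + h..b}" for u z
    proof -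
      have "(\<integral>\<^sup>+x. H x u z \<partial>lborel) = (\<integral>\<^sup>+x. ennreal (p (u - s) (z - x)) * ennreal (p (t - u) (x + h - z)) * q z \<partial>lborel)"
      proof (rule nn_integral_cong)
        fix x
        show "H x u z = ennreal (p (u - s) (z - x)) * ennreal (p (t - u) (x + h - z)) * q z"
        proof (cases "x \<in> {a..b}")
          case False
          then have "x < a \<or> x > b" by auto
          then have "z - x \<le> 0 \<or> x + h - z \<le> 0" using z by auto
          then have "p (u - s) (z - x) = 0 \<or> p (t - u) (x + h - z) = 0" using u pzero by auto
          then show ?thesis using False u by (auto simp: H_def)
        qed (use u in \<open>simp add: H_def\<close>)
      qed
      also have "\<dots> = (\<integral>\<^sup>+x. ennreal (p (u - s) (z - x)) * ennreal (p (t - u) (x + h - z)) \<partial>lborel) * q z"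
        by (rule nn_integral_multc) measurable
      also have "(\<integral>\<^sup>+x. ennreal (p (u - s) (z - x)) * ennreal (p (t - u) (x + h - z)) \<partial>lborel) = conv u"
        unfolding conv_def
        by (subst nn_integral_real_affine[where c=1 and t="z - h"]) (auto simp: algebra_simps)
      finally show ?thesis using u z by (simp add: mult.commute)
    qed
    have "Q * (ennreal (p T h) * ennreal T) = (\<integral>\<^sup>+u. indicator {s<..<t} u * conv u * Q \<partial>lborel)"
      unfolding cI[symmetric] by (subst mult.commute, rule nn_integral_multc[symmetric]) (unfold conv_def, measurable)
    also have "\<dots> = (\<integral>\<^sup>+u. (\<integral>\<^sup>+z. indicator {s<..<t} u * conv u * (q z * indicator {a + h..b} z) \<partial>lborel) \<partial>lborel)"
      unfolding Q_def by (intro nn_integral_cong nn_integral_cmult[symmetric]) simp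
    also have "\<dots> \<le> (\<integral>\<^sup>+u. (\<integral>\<^sup>+z. (\<integral>\<^sup>+x. H x u z \<partial>lborel) \<partial>lborel) \<partial>lborel)"
    proof (intro nn_integral_mono)
      fix u z
      show "indicator {s<..<t} u * conv u * (q z * indicator {a + h..b} z) \<le> (\<integral>\<^sup>+x. H x u z \<partial>lborel)"
      proof (cases "u \<in> {s<..<t} \<and> z \<in> {a + h..b}")
        case True
        then show ?thesis using transl[of u z] by (simp add: mult_ac)
      qed auto
    qed
    also have "\<dots> = (\<integral>\<^sup>+u. (\<integral>\<^sup>+x. (\<integral>\<^sup>+z. H x u z \<partial>lborel) \<partial>lborel) \<partial>lborel)"
    proof (rule nn_integral_cong)
      fix u
      show "(\<integral>\<^sup>+z. (\<integral>\<^sup>+x. H x u z \<partial>lborel) \<partial>lborel) = (\<integral>\<^sup>+x. (\<integral>\<^sup>+z. H x u z \<partial>lborel) \<partial>lborel)"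
        by (rule lborel_pair.Fubini', unfold H_def, measurable)
    qed
    also have "\<dots> = (\<integral>\<^sup>+x. (\<integral>\<^sup>+u. (\<integral>\<^sup>+z. H x u z \<partial>lborel) \<partial>lborel) \<partial>lborel)"
      by (rule lborel_pair.Fubini', unfold H_def, measurable)
    also have "\<dots> = (\<integral>\<^sup>+x. indicator {a..b} x * (\<integral>\<^sup>+u. indicator {s<..<t} u * (\<integral>\<^sup>+z. ennreal (p (u - s) (z - x)) * ennreal (p (t - u) (x + h - z)) * q z \<partial>lborel) \<partial>lborel) \<partial>lborel)"
    proof (rule nn_integral_cong)
      fix x
      have "(\<integral>\<^sup>+u. (\<integral>\<^sup>+z. H x u z \<partial>lborel) \<partial>lborel) = (\<integral>\<^sup>+u. indicator {a..b} x * (indicator {s<..<t} u * (\<integral>\<^sup>+z. ennreal (p (u - s) (z - x)) * ennreal (p (t - u) (x + h - z)) * q z \<partial>lborel)) \<partial>lborel)"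
        unfolding H_def by (intro nn_integral_cong) (simp add: nn_integral_cmult mult.assoc)
      also have "\<dots> = indicator {a..b} x * (\<integral>\<^sup>+u. indicator {s<..<t} u * (\<integral>\<^sup>+z. ennreal (p (u - s) (z - x)) * ennreal (p (t - u) (x + h - z)) * q z \<partial>lborel) \<partial>lborel)"
        by (rule nn_integral_cmult) measurable
      finally show "(\<integral>\<^sup>+u. (\<integral>\<^sup>+z. H x u z \<partial>lborel) \<partial>lborel) = indicator {a..b} x * (\<integral>\<^sup>+u. indicator {s<..<t} u * (\<integral>\<^sup>+z. ennreal (p (u - s) (z - x)) * ennreal (p (t - u) (x + h - z)) * q z \<partial>lborel) \<partial>lborel)" .
    qed
    also have "\<dots> \<le> (\<integral>\<^sup>+x. indicator {a..b} x * (ennreal (p T h) * Sv) \<partial>lborel)"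
      by (intro nn_integral_mono mult_left_mono J h) simp
    also have "\<dots> = ennreal (p T h) * Sv * ennreal (b - a)"
      using ab by (simp add: nn_integral_multc mult.commute)
    finally have "Q * (ennreal (p T h) * ennreal T) \<le> ennreal (p T h) * Sv * ennreal (b - a)" .
    then have "ennreal (p T h) * (Q * ennreal T) \<le> ennreal (p T h) * (Sv * ennreal (b - a))"
      by (simp add: mult_ac)
    then show ?thesis unfolding Q_def[symmetric] using Dpos
      by (subst (asm) ennreal_mult_le_mult_iff) auto
  qed
  have goodAE: "AE h in lborel. AE u in lborel. u \<in> {s<..<t} \<longrightarrow>
     ennreal (p (t - s) h) = (\<integral>\<^sup>+y. ennreal (p (u - s) (h - y)) * ennreal (p (t - u) y) \<partial>lborel)"
    by (rule CK2[OF sub dens pm st])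
  have exgood: "\<exists>h\<in>{0<..<\<delta>}. AE u in lborel. u \<in> {s<..<t} \<longrightarrow>
     ennreal (p (t - s) h) = (\<integral>\<^sup>+y. ennreal (p (u - s) (h - y)) * ennreal (p (t - u) y) \<partial>lborel)"
    if d: "\<delta> > 0" for \<delta> :: real
  proof (rule ccontr)
    assume nex: "\<not> ?thesis"
    from goodAE obtain N where N: "{h \<in> space lborel. \<not> (AE u in lborel. u \<in> {s<..<t} \<longrightarrow>
     ennreal (p (t - s) h) = (\<integral>\<^sup>+y. ennreal (p (u - s) (h - y)) * ennreal (p (t - u) y) \<partial>lborel))} \<subseteq> N"
      "N \<in> null_sets lborel" by (rule AE_E) (blast intro: null_setsI)
    have "{0<..<\<delta>} \<subseteq> N" using nex N(1) by auto
    then have "emeasure lborel {0<..<\<delta>} \<le> emeasure lborel N" by (intro emeasure_mono) (use N(2) in auto)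
    then show False using N(2) d by (auto simp: null_sets_def)
  qed
  obtain Sr where Sr: "Sv = ennreal Sr" "Sr \<ge> 0" using Sv_fin by (cases Sv rule: ennreal_cases) auto
  define Kr where "Kr = Sr / T"
  have Kr: "Kr \<ge> 0" using Sr T by (simp add: Kr_def)
  have intv: "(\<integral>\<^sup>+z. q z * indicator {a'..b} z \<partial>lborel) \<le> ennreal (Kr * (b - a'))" if ab: "a' < b" for a' b
  proof (rule ennreal_le_epsilon)
    fix e :: real assume e: "0 < e"
    define \<delta> where "\<delta> = e / (Kr + 1)"
    have d: "\<delta> > 0" using e Kr by (simp add: \<delta>_def)
    obtain h where h: "h \<in> {0<..<\<delta>}" and hg: "AE u in lborel. u \<in> {s<..<t} \<longrightarrow>
     ennreal (p (t - s) h) = (\<integral>\<^sup>+y. ennreal (p (u - s) (h - y)) * ennreal (p (t - u) y) \<partial>lborel)"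
      using exgood[OF d] by blast
    define a where "a = a' - \<delta>"
    have "a < b" using ab d by (simp add: a_def)
    from step4[OF this _ hg] h
    have s4: "(\<integral>\<^sup>+z. q z * indicator {a + h..b} z \<partial>lborel) * ennreal T \<le> ennreal (Sr * (b - a))"
      using Sr \<open>a < b\<close> by (simp add: ennreal_mult)
    have "(\<integral>\<^sup>+z. q z * indicator {a'..b} z \<partial>lborel) \<le> (\<integral>\<^sup>+z. q z * indicator {a + h..b} z \<partial>lborel)"
      using h by (intro nn_integral_mono) (auto simp: a_def indicator_def)
    then have "(\<integral>\<^sup>+z. q z * indicator {a'..b} z \<partial>lborel) * ennreal T \<le> ennreal (Sr * (b - a))"
      using s4 by (meson mult_right_mono order_trans zero_le)
    then have "(\<integral>\<^sup>+z. q z * indicator {a'..b} z \<partial>lborel) * ennreal T * ennreal (1 / T) \<le> ennreal (Sr * (b - a)) * ennreal (1 / T)"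
      by (rule mult_right_mono) simp
    moreover have "ennreal T * ennreal (1 / T) = 1" using T by (simp add: ennreal_mult[symmetric])
    moreover have "ennreal (Sr * (b - a)) * ennreal (1 / T) = ennreal (Kr * (b - a') + Kr * \<delta>)"
    proof -
      have "ennreal (Sr * (b - a)) * ennreal (1 / T) = ennreal (Sr * (b - a) * (1 / T))"
        using T Sr \<open>a < b\<close> by (intro ennreal_mult[symmetric]) auto
      also have "Sr * (b - a) * (1 / T) = Kr * (b - a') + Kr * \<delta>"
        using T unfolding Kr_def a_def by (simp add: field_simps)
      finally show ?thesis .
    qed
    ultimately have "(\<integral>\<^sup>+z. q z * indicator {a'..b} z \<partial>lborel) \<le> ennreal (Kr * (b - a') + Kr * \<delta>)"
      by (simp add: mult.assoc)
    also have "\<dots> = ennreal (Kr * (b - a')) + ennreal (Kr * \<delta>)"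
      using Kr d ab by (intro ennreal_plus) auto
    also have "ennreal (Kr * \<delta>) \<le> ennreal e"
      using Kr e unfolding \<delta>_def by (intro ennreal_leI) (simp add: field_simps)
    finally show "(\<integral>\<^sup>+z. q z * indicator {a'..b} z \<partial>lborel) \<le> ennreal (Kr * (b - a')) + ennreal e"
      by (simp add: add_left_mono)
  qed
  have "AE z in lborel. q z \<le> ennreal (Kr + 1)"
    by (rule bounded_from_intervals[OF qm Kr intv])
  then show ?thesis by blast
qed

end
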